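(* For every $A\in\mathsf{TNNIL}$: (1) $\mathsf{LLe}^+\vdash\boxdot A^l\leftrightarrow\boxdot A^\Box$; (2) $\mathsf{LLe}^+\vdash A^\Box\to A$; (3) if $A\in\mathsf{NOI}$ then $\mathsf{LLe}^+\vdash A^\Box\leftrightarrow A$; (4) $\mathsf{LLe}^+\vdash\Box A\leftrightarrow\Box A^\Box$.
   Context: Modal language: propositional variables, $\bot$, $\wedge,\vee,\to$, $\Box$; atomic = variables and $\bot$; $\boxdot A:=A\wedge\Box A$. $\mathsf{iGL}$: intuitionistic propositional logic in the modal language plus $\Box(A\to B)\to(\Box A\to\Box B)$, $\Box A\to\Box\Box A$, $\Box(\Box A\to A)\to\Box A$, closed under modus ponens and necessitation. $\mathsf{NOI}$: propositions in which every $\to$ is in the scope of a $\Box$. Leivant's translation: $A^l=A$ for atomic/boxed $A$; $(A\wedge B)^l=A^l\wedge B^l$; $(A\vee B)^l=\boxdot A^l\vee\boxdot B^l$; $(A\to B)^l=A\to B^l$ if $A\in\mathsf{NOI}$, else $A\to B$. $\mathsf{LLe}^+:=\mathsf{iGL}+\{\Box A\to\Box A^l\}+\{p\to\Box p: p\text{ atomic}\}$. $\mathsf{TNNIL}$: smallest class containing atomic propositions, closed under $\wedge,\vee,\Box$, and containing $A\to B$ whenever $A,B\in\mathsf{TNNIL}$ and $A\in\mathsf{NOI}$. Box-translation: $A^\Box:=A\wedge\Box A$ for atomic $A$; $(A\circ B)^\Box:=A^\Box\circ B^\Box$ for $\circ\in\{\wedge,\vee\}$; $(A\to B)^\Box:=(A^\Box\to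 B^\Box)\wedge\Box(A^\Box\to B^\Box)$; $(\Box A)^\Box:=\Box(A^\Box)$. *)

theory Defs
  imports Main
begin

datatype fm = Var nat | Bot | And fm fm | Or fm fm | Imp fm fm | Box fm

fun atomic :: "fm \<Rightarrow> bool" where
  "atomic (Var n) = True"
| "atomic Bot = True"
| "atomic _ = False"

definition Iff :: "fm \<Rightarrow> fm \<Rightarrow> fm" where
  "Iff A B = And (Imp A B) (Imp B A)"

definition boxdot :: "fm \<Rightarrow> fm" where
  "boxdot A = And A (Box A)"

fun NOI :: "fm \<Rightarrow> bool" where
  "NOI (Var n) = True"
| "NOI Bot = True"
| "NOI (And A B) = (NOI A \<and> NOI B)"
| "NOI (Or A B) = (NOI A \<and> NOI B)"
| "NOI (Imp A B) = False"
| "NOI (Box A) = True"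

fun leiv :: "fm \<Rightarrow> fm" where
  "leiv (Var n) = Var n"
| "leiv Bot = Bot"
| "leiv (Box A) = Box A"
| "leiv (And A B) = And (leiv A) (leiv B)"
| "leiv (Or A B) = Or (boxdot (leiv A)) (boxdot (leiv B))"
| "leiv (Imp A B) = (if NOI A then Imp A (leiv B) else Imp A B)"

fun boxtr :: "fm \<Rightarrow> fm" where
  "boxtr (Var n) = And (Var n) (Box (Var n))"
| "boxtr Bot = And Bot (Box Bot)"
| "boxtr (And A B) = And (boxtr A) (boxtr B)"
| "boxtr (Or A B) = Or (boxtr A) (boxtr B)"
| "boxtr (Imp A B) = And (Imp (boxtr A) (boxtr B)) (Box (Imp (boxtr A) (boxtr B)))"
| "boxtr (Box A) = Box (boxtr A)"

inductive TNNIL :: "fm \<Rightarrow> bool" where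
  tn_atom: "atomic A \<Longrightarrow> TNNIL A"
| tn_and: "TNNIL A \<Longrightarrow> TNNIL B \<Longrightarrow> TNNIL (And A B)"
| tn_or: "TNNIL A \<Longrightarrow> TNNIL B \<Longrightarrow> TNNIL (Or A B)"
| tn_box: "TNNIL A \<Longrightarrow> TNNIL (Box A)"
| tn_imp: "TNNIL A \<Longrightarrow> TNNIL B \<Longrightarrow> NOI A \<Longrightarrow> TNNIL (Imp A B)"

inductive LLe_plus :: "fm \<Rightarrow> bool" where
  ax_k: "LLe_plus (Imp A (Imp B A))"
| ax_s: "LLe_plus (Imp (Imp A (Imp B C)) (Imp (Imp A B) (Imp A C)))"
| ax_and1: "LLe_plus (Imp (And A B) A)"
| ax_and2: "LLe_plus (Imp (And A B) B)"
| ax_andI: "LLe_plus (Imp A (Imp B (And A B)))"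
| ax_or1: "LLe_plus (Imp A (Or A B))"
| ax_or2: "LLe_plus (Imp B (Or A B))"
| ax_orE: "LLe_plus (Imp (Imp A C) (Imp (Imp B C) (Imp (Or A B) C)))"
| ax_efq: "LLe_plus (Imp Bot A)"
| ax_K: "LLe_plus (Imp (Box (Imp A B)) (Imp (Box A) (Box B)))"
| ax_4: "LLe_plus (Imp (Box A) (Box (Box A)))"
| ax_L: "LLe_plus (Imp (Box (Imp (Box A) A)) (Box A))"
| ax_Le: "LLe_plus (Imp (Box A) (Box (leiv A)))"
| ax_cp: "atomic p \<Longrightarrow> LLe_plus (Imp p (Box p))"
| mp: "LLe_plus (Imp A B) \<Longrightarrow> LLe_plus A \<Longrightarrow> LLe_plus B"
| nec: "LLe_plus A \<Longrightarrow> LLe_plus (Box A)"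

end

theory Submission
  imports Defs
begin

abbreviation pv ("\<turnstile> _" [20] 20) where "pv X \<equiv> LLe_plus X"

lemma lift: "\<turnstile> X \<Longrightarrow> \<turnstile> Imp H X" by (rule mp[OF ax_k])
lemma hmp: "\<turnstile> Imp H (Imp X Y) \<Longrightarrow> \<turnstile> Imp H X \<Longrightarrow> \<turnstile> Imp H Y"
  by (rule mp[OF mp[OF ax_s]])
lemma idI: "\<turnstile> Imp A A"
  by (rule hmp[OF ax_k ax_k[where B=A]])
lemma trans: "\<turnstile> Imp A B \<Longrightarrow> \<turnstile> Imp B C \<Longrightarrow> \<turnstile> Imp A C"
  by (rule hmp[OF lift])
lemma app: "\<turnstile> Imp X Y \<Longrightarrow> \<turnstile> Imp H X \<Longrightarrow> \<turnstile> Imp H Y"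
  using trans by blast
lemma cE1: "\<turnstile> Imp H (And A B) \<Longrightarrow> \<turnstile> Imp H A" using trans ax_and1 by blast
lemma cE2: "\<turnstile> Imp H (And A B) \<Longrightarrow> \<turnstile> Imp H B" using trans ax_and2 by blast
lemma cI: "\<turnstile> Imp H A \<Longrightarrow> \<turnstile> Imp H B \<Longrightarrow> \<turnstile> Imp H (And A B)"
  by (rule hmp[OF hmp[OF lift[OF ax_andI]]])
lemma dE: "\<turnstile> Imp H (Imp A C) \<Longrightarrow> \<turnstile> Imp H (Imp B C) \<Longrightarrow> \<turnstile> Imp H (Or A B) \<Longrightarrow> \<turnstile> Imp H C"
  by (rule hmp[OF hmp[OF hmp[OF lift[OF ax_orE]]]])
lemma impI: assumes "\<turnstile> Imp (And H A) B" shows "\<turnstile> Imp H (Imp A B)"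
proof -
  have 1: "\<turnstile> Imp H (Imp A (And H A))" by (rule ax_andI)
  have 2: "\<turnstile> Imp H (Imp A (Imp (And H A) B))" by (rule lift, rule lift, rule assms)
  show ?thesis by (rule hmp[OF hmp[OF lift[OF ax_s] 2] 1])
qed
lemma boxK: "\<turnstile> Imp H (Box (Imp X Y)) \<Longrightarrow> \<turnstile> Imp H (Box X) \<Longrightarrow> \<turnstile> Imp H (Box Y)"
  by (rule hmp[OF hmp[OF lift[OF ax_K]]])
lemma boxM: "\<turnstile> Imp X Y \<Longrightarrow> \<turnstile> Imp H (Box X) \<Longrightarrow> \<turnstile> Imp H (Box Y)"
  by (rule boxK[OF lift[OF nec]])
lemma box_conj: "\<turnstile> Imp H (Box X) \<Longrightarrow> \<turnstile> Imp H (Box Y) \<Longrightarrow> \<turnstile> Imp H (Box (And X Y))"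
  by (rule boxK[OF boxM[OF ax_andI]])
lemma box4: "\<turnstile> Imp H (Box X) \<Longrightarrow> \<turnstile> Imp H (Box (Box X))"
  using trans ax_4 by blast
lemma iffI: "\<turnstile> Imp A B \<Longrightarrow> \<turnstile> Imp B A \<Longrightarrow> \<turnstile> Iff A B"
  unfolding Iff_def by (rule mp[OF mp[OF ax_andI]])
lemma iffD1: "\<turnstile> Iff A B \<Longrightarrow> \<turnstile> Imp A B" unfolding Iff_def by (rule mp[OF ax_and1])
lemma iffD2: "\<turnstile> Iff A B \<Longrightarrow> \<turnstile> Imp B A" unfolding Iff_def by (rule mp[OF ax_and2])
lemma iff_sym: "\<turnstile> Iff A B \<Longrightarrow> \<turnstile> Iff B A" using iffI iffD1 iffD2 by blast
lemma iff_trans: "\<turnstile> Iff A B \<Longrightarrow> \<turnstile> Iff B C \<Longrightarrow> \<turnstile> Iff A C"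
  using iffI iffD1 iffD2 trans by metis

lemma bd_self: "\<turnstile> Imp X (Box X) \<Longrightarrow> \<turnstile> Iff (boxdot X) X"
  unfolding boxdot_def by (rule iffI[OF ax_and1 cI[OF idI]])
lemma bd_box: "\<turnstile> Imp (boxdot X) (Box (boxdot X))"
  unfolding boxdot_def by (rule box_conj[OF cE2[OF idI] box4[OF cE2[OF idI]]])
lemma bd_mono: "\<turnstile> Imp X Y \<Longrightarrow> \<turnstile> Imp (boxdot X) (boxdot Y)"
  unfolding boxdot_def by (rule cI[OF app[OF _ cE1[OF idI]] boxM[OF _ cE2[OF idI]]])
lemma bd_cong: "\<turnstile> Iff X Y \<Longrightarrow> \<turnstile> Iff (boxdot X) (boxdot Y)"
  using iffI iffD1 iffD2 bd_mono by metis
lemma or_mono: "\<turnstile> Imp X X' \<Longrightarrow> \<turnstile> Imp Y Y' \<Longrightarrow> \<turnstile> Imp (Or X Y) (Or X' Y')"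
  by (rule dE[OF lift[OF trans[OF _ ax_or1]] lift[OF trans[OF _ ax_or2]] idI])
lemma or_cong: "\<turnstile> Iff X X' \<Longrightarrow> \<turnstile> Iff Y Y' \<Longrightarrow> \<turnstile> Iff (Or X Y) (Or X' Y')"
  using iffI iffD1 iffD2 or_mono by metis
lemma and_mono: "\<turnstile> Imp X X' \<Longrightarrow> \<turnstile> Imp Y Y' \<Longrightarrow> \<turnstile> Imp (And X Y) (And X' Y')"
  by (rule cI[OF app[OF _ cE1[OF idI]] app[OF _ cE2[OF idI]]])
lemma and_cong: "\<turnstile> Iff X X' \<Longrightarrow> \<turnstile> Iff Y Y' \<Longrightarrow> \<turnstile> Iff (And X Y) (And X' Y')"
  using iffI iffD1 iffD2 and_mono by metis
lemma box_cong: "\<turnstile> Iff X Y \<Longrightarrow> \<turnstile> Iff (Box X) (Box Y)"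
  using iffI iffD1 iffD2 boxM idI by metis
lemma imp_mono_l: assumes "\<turnstile> Imp X' X" shows "\<turnstile> Imp (Imp X Y) (Imp X' Y)"
  by (rule impI, rule hmp[OF cE1[OF idI] app[OF assms cE2[OF idI]]])
lemma imp_cong_l: "\<turnstile> Iff X X' \<Longrightarrow> \<turnstile> Iff (Imp X Y) (Imp X' Y)"
  using iffI iffD1 iffD2 imp_mono_l by metis

lemma S: "\<turnstile> Imp (boxtr A) (Box (boxtr A))"
proof (induction A)
  case (Var x) show ?case using bd_box[of "Var x"] by (simp add: boxdot_def)
next
  case Bot show ?case using bd_box[of Bot] by (simp add: boxdot_def)
next
  case (And A B) show ?case using And
    by (simp, intro box_conj app[OF _ cE1[OF idI]] app[OF _ cE2[OF idI]])
next
  case (Or A B)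
  have a: "\<turnstile> Imp (boxtr A) (Box (Or (boxtr A) (boxtr B)))" by (rule boxM[OF ax_or1 Or(1)])
  have b: "\<turnstile> Imp (boxtr B) (Box (Or (boxtr A) (boxtr B)))" by (rule boxM[OF ax_or2 Or(2)])
  show ?case by (simp, rule dE[OF lift[OF a] lift[OF b] idI])
next
  case (Imp A B) show ?case using bd_box[of "Imp (boxtr A) (boxtr B)"] by (simp add: boxdot_def)
next
  case (Box A) show ?case by (simp add: ax_4)
qed

lemma gen4:
  assumes h1: "\<turnstile> Iff (boxdot (leiv A)) (boxdot (boxtr A))" and h2: "\<turnstile> Imp (boxtr A) A"
  shows "\<turnstile> Iff (Box A) (Box (boxtr A))"
proof (rule iffI)
  have a1: "\<turnstile> Imp (Box A) (Box (leiv A))" by (rule ax_Le)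
  have a2: "\<turnstile> Imp (Box A) (Box (boxdot (leiv A)))"
    unfolding boxdot_def by (rule box_conj[OF a1 box4[OF a1]])
  have a3: "\<turnstile> Imp (Box A) (Box (boxdot (boxtr A)))" by (rule boxM[OF iffD1[OF h1] a2])
  show "\<turnstile> Imp (Box A) (Box (boxtr A))" by (rule boxM[OF _ a3], unfold boxdot_def, rule ax_and1)
  show "\<turnstile> Imp (Box (boxtr A)) (Box A)" by (rule boxM[OF h2 idI])
qed

lemma atomic_facts: "atomic A \<Longrightarrow> leiv A = A \<and> boxtr A = And A (Box A) \<and> NOI A"
  by (cases A) auto

theorem lemma4p21:
  assumes "TNNIL A"
  shows "LLe_plus (Iff (boxdot (leiv A)) (boxdot (boxtr A))) \<and>
         LLe_plus (Imp (boxtr A) A) \<and>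
         (NOI A \<longrightarrow> LLe_plus (Iff (boxtr A) A)) \<and>
         LLe_plus (Iff (Box A) (Box (boxtr A)))"
  using assms
proof (induction A rule: TNNIL.induct)
  case (tn_atom A)
  note f = atomic_facts[OF tn_atom]
  have 1: "\<turnstile> Iff (boxdot (leiv A)) (boxdot (boxtr A))"
    using iff_sym[OF bd_self[OF S[of A]]] f by (simp add: boxdot_def)
  have 2: "\<turnstile> Imp (boxtr A) A" using f ax_and1 by simp
  have 3: "\<turnstile> Iff (boxtr A) A" using f iffI[OF ax_and1 cI[OF idI ax_cp[OF tn_atom]]] by simp
  show ?case using 1 2 3 gen4 by blast
next
  case (tn_and A B)
  have 1: "\<turnstile> Iff (boxdot (leiv (And A B))) (boxdot (boxtr (And A B)))"
  proof -
    have e: "\<turnstile> Iff (boxdot (And X Y)) (And (boxdot X) (boxdot Y))" for X Y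
    proof -
      let ?L = "And (And X Y) (Box (And X Y))"
      let ?R = "And (And X (Box X)) (And Y (Box Y))"
      have a: "\<turnstile> Imp ?L ?R"
        by (rule cI[OF cI[OF cE1[OF cE1[OF idI]] boxM[OF ax_and1 cE2[OF idI]]]
                       cI[OF cE2[OF cE1[OF idI]] boxM[OF ax_and2 cE2[OF idI]]]])
      have b: "\<turnstile> Imp ?R ?L"
        by (rule cI[OF cI[OF cE1[OF cE1[OF idI]] cE1[OF cE2[OF idI]]]
                       box_conj[OF cE2[OF cE1[OF idI]] cE2[OF cE2[OF idI]]]])
      show ?thesis unfolding boxdot_def by (rule iffI[OF a b])
    qed
    show ?thesis using tn_and.IH
      by (simp, meson e iff_trans iff_sym and_cong)
  qed
  have 2: "\<turnstile> Imp (boxtr (And A B)) (And A B)" using tn_and.IH by (simp add: and_mono)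
  have 3: "NOI (And A B) \<longrightarrow> (\<turnstile> Iff (boxtr (And A B)) (And A B))" using tn_and.IH by (simp add: and_cong)
  show ?case using 1 2 3 gen4 by blast
next
  case (tn_or A B)
  have sa: "\<turnstile> Iff (boxdot (leiv A)) (boxtr A)" using tn_or.IH iff_trans bd_self[OF S] by blast
  have sb: "\<turnstile> Iff (boxdot (leiv B)) (boxtr B)" using tn_or.IH iff_trans bd_self[OF S] by blast
  have 1: "\<turnstile> Iff (boxdot (leiv (Or A B))) (boxdot (boxtr (Or A B)))"
    using bd_cong[OF or_cong[OF sa sb]] by simp
  have 2: "\<turnstile> Imp (boxtr (Or A B)) (Or A B)" using tn_or.IH by (simp add: or_mono)
  have 3: "NOI (Or A B) \<longrightarrow> (\<turnstile> Iff (boxtr (Or A B)) (Or A B))" using tn_or.IH by (simp add: or_cong)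
  show ?case using 1 2 3 gen4 by blast
next
  case (tn_box A)
  have 1: "\<turnstile> Iff (boxdot (leiv (Box A))) (boxdot (boxtr (Box A)))"
    using tn_box.IH bd_cong by simp
  have 2: "\<turnstile> Imp (boxtr (Box A)) (Box A)" using tn_box.IH boxM[OF _ idI] by simp
  have 3: "NOI (Box A) \<longrightarrow> (\<turnstile> Iff (boxtr (Box A)) (Box A))" using tn_box.IH iff_sym by simp
  show ?case using 1 2 3 gen4 by blast
next
  case (tn_imp A B)
  define C where "C = Imp (boxtr A) (boxtr B)"
  define D where "D = Imp A (leiv B)"
  define E where "E = Imp A (boxtr B)"
  have A3: "\<turnstile> Iff (boxtr A) A" using tn_imp by blast
  have B1: "\<turnstile> Iff (boxdot (leiv B)) (boxdot (boxtr B))" using tn_imp by blast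
  have B2: "\<turnstile> Imp (boxtr B) B" using tn_imp by blast
  have A2: "\<turnstile> Imp (boxtr A) A" using tn_imp by blast
  have tbd: "\<turnstile> Iff (boxdot (boxtr B)) (boxtr B)" by (rule bd_self[OF S])
  have Abox: "\<turnstile> Imp A (Box A)"
    by (rule boxM[OF A2 app[OF S iffD2[OF A3]]])
  have DE: "\<turnstile> Imp (boxdot D) E"
  proof -
    let ?H = "And (boxdot D) A"
    have hD: "\<turnstile> Imp ?H (Imp A (leiv B))" unfolding boxdot_def D_def by (rule cE1[OF cE1[OF idI]])
    have hbD: "\<turnstile> Imp ?H (Box (Imp A (leiv B)))" unfolding boxdot_def D_def by (rule cE2[OF cE1[OF idI]])
    have hA: "\<turnstile> Imp ?H A" by (rule cE2[OF idI])
    have hbA: "\<turnstile> Imp ?H (Box A)" by (rule app[OF Abox hA])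
    have hl: "\<turnstile> Imp ?H (leiv B)" using hmp[OF hD hA] .
    have hbl: "\<turnstile> Imp ?H (Box (leiv B))" using boxK[OF hbD hbA] .
    have "\<turnstile> Imp ?H (boxdot (leiv B))" using cI[OF hl hbl] unfolding boxdot_def .
    then have "\<turnstile> Imp ?H (boxtr B)"
      by (rule app[OF iffD1[OF tbd] app[OF iffD1[OF B1]]])
    then show ?thesis unfolding E_def by (rule impI)
  qed
  have ED: "\<turnstile> Imp E D"
  proof -
    let ?H = "And E A"
    have "\<turnstile> Imp ?H (boxtr B)" unfolding E_def by (rule hmp[OF cE1[OF idI] cE2[OF idI]])
    then have "\<turnstile> Imp ?H (boxdot (leiv B))"
      by (rule app[OF iffD2[OF B1] app[OF iffD2[OF tbd]]])
    then have "\<turnstile> Imp ?H (leiv B)" unfolding boxdot_def by (rule cE1)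
    then show ?thesis unfolding D_def by (rule impI)
  qed
  have bDE: "\<turnstile> Iff (boxdot D) (boxdot E)"
  proof (rule iffI)
    show "\<turnstile> Imp (boxdot D) (boxdot E)" unfolding boxdot_def[of E]
      by (rule cI[OF DE boxM[OF DE bd_box]])
    show "\<turnstile> Imp (boxdot E) (boxdot D)" by (rule bd_mono[OF ED])
  qed
  have EC: "\<turnstile> Iff (boxdot E) (boxdot C)"
    unfolding E_def C_def by (rule bd_cong[OF imp_cong_l[OF iff_sym[OF A3]]])
  have CC: "\<turnstile> Iff (boxdot C) (boxdot (boxdot C))"
    by (rule iff_sym[OF bd_self[OF bd_box]])
  have bt: "boxtr (Imp A B) = boxdot C" by (simp add: C_def boxdot_def)
  have lv: "leiv (Imp A B) = D" using tn_imp by (simp add: D_def)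
  have 1: "\<turnstile> Iff (boxdot (leiv (Imp A B))) (boxdot (boxtr (Imp A B)))"
    unfolding bt lv using iff_trans[OF bDE iff_trans[OF EC CC]] .
  have 2: "\<turnstile> Imp (boxtr (Imp A B)) (Imp A B)"
  proof -
    let ?H = "And (boxdot C) A"
    have "\<turnstile> Imp ?H (boxtr B)" unfolding boxdot_def C_def
      by (rule hmp[OF cE1[OF cE1[OF idI]] app[OF iffD2[OF A3] cE2[OF idI]]])
    then have "\<turnstile> Imp ?H B" by (rule app[OF B2])
    then show ?thesis unfolding bt by (rule impI)
  qed
  have 4: "\<turnstile> Iff (Box (Imp A B)) (Box (boxtr (Imp A B)))" by (rule gen4[OF 1 2])
  show ?case using 1 2 4 by simp
qed

end
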